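(* Let $\rho=(R,V,\beta,\Phi)$ be a form ring such that at least one code of Type $\rho$ exists. Then $$\gcd\{N\ge1:\exists\ C\le V^N \text{ of Type }\rho\}=\min\{N\ge1:\exists\ C\le V^N\text{ of Type }\rho\}.$$
   Context: Let $R$ be a finite ring with $1$ and $V$ a finite left $R$-module. $\mathrm{Bil}(V,\mathbb Q/\mathbb Z)$ denotes the group of $\mathbb Z$-bilinear maps $V\times V\to\mathbb Q/\mathbb Z$; for $\beta$ in it and $r\in R$ write $\beta_r(v,w):=\beta(v,rw)$ and $\beta^\tau(v,w):=\beta(w,v)$. $\beta$ is nonsingular if $v\mapsto\beta(v,\cdot)$ is an isomorphism $V\to\mathrm{Hom}(V,\mathbb Q/\mathbb Z)$. $\mathrm{Quad}_0(V,\mathbb Q/\mathbb Z)$ is the group of maps $\phi:V\to\mathbb Q/\mathbb Z$ with $\phi(0)=0$ and $\phi(x+y+z)-\phi(x+y)-\phi(x+z)-\phi(y+z)+\phi(x)+\phi(y)+\phi(z)=0$ for all $x,y,z\in V$. For $r\in R$ put $(\phi[r])(v):=\phi(rv)$; a sub-$R$-qmodule of $\mathrm{Quad}_0(V,\mathbb Q/\mathbb Z)$ is a subgroup closed under all maps $\phi\mapsto\phi[r]$. Define $\{\!\{\beta\}\!\}(v):=\beta(v,v)$ and $\lambda(\phi)(v,w):=\phi(v+w)-\phi(v)-\phi(w)$. $\beta$ is admissible if it is nonsingular, $M:=\{\beta_r:r\in R\}$ is closed under $\tau$, and $r\mapsto\beta_r$ is a bijection $R\to M$. A form ring is a quadruple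 $\rho=(R,V,\beta,\Phi)$ with $\beta$ admissible and $\Phi$ a sub-$R$-qmodule of $\mathrm{Quad}_0(V,\mathbb Q/\mathbb Z)$ such that $\{\!\{m\}\!\}\in\Phi$ for all $m\in M$ and $\lambda(\Phi)\subseteq M$. A code of length $N$ is a left $R$-submodule $C\le V^N$; $C^\perp=\{x\in V^N:\sum_i\beta(x_i,c_i)=0\ \forall c\in C\}$; $C$ is self-dual if $C=C^\perp$, isotropic if $\sum_i\phi(c_i)=0$ for all $c\in C,\phi\in\Phi$; a code of Type $\rho$ is a self-dual isotropic code. *)

theory Defs
  imports Complex_Main
begin

definition qz_rel :: "rat \<Rightarrow> rat \<Rightarrow> bool" where
  "qz_rel x y \<longleftrightarrow> x - y \<in> \<int>"

quotient_type qz = rat / qz_rel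
proof (rule equivpI)
  show "reflp qz_rel" by (rule reflpI) (simp add: qz_rel_def)
  show "symp qz_rel"
  proof (rule sympI)
    fix x y assume "qz_rel x y"
    then have "- (x - y) \<in> \<int>" unfolding qz_rel_def by (rule Ints_minus)
    then show "qz_rel y x" by (simp add: qz_rel_def)
  qed
  show "transp qz_rel"
  proof (rule transpI)
    fix x y z assume "qz_rel x y" "qz_rel y z"
    then have "(x - y) + (y - z) \<in> \<int>" unfolding qz_rel_def by (rule Ints_add)
    then show "qz_rel x z" by (simp add: qz_rel_def)
  qed
qed

instantiation qz :: ab_group_add
begin
lift_definition zero_qz :: qz is "0::rat" .
lift_definition plus_qz :: "qz \<Rightarrow> qz \<Rightarrow> qz" is "(+)"
proof -
  fix a b c d :: rat assume "qz_rel a b" "qz_rel c d"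
  then have "(a - b) + (c - d) \<in> \<int>" unfolding qz_rel_def by (rule Ints_add)
  then show "qz_rel (a + c) (b + d)" by (simp add: qz_rel_def algebra_simps)
qed
lift_definition uminus_qz :: "qz \<Rightarrow> qz" is "uminus"
proof -
  fix a b :: rat assume "qz_rel a b"
  then have "- (a - b) \<in> \<int>" unfolding qz_rel_def by (rule Ints_minus)
  then show "qz_rel (- a) (- b)" by (simp add: qz_rel_def algebra_simps)
qed
lift_definition minus_qz :: "qz \<Rightarrow> qz \<Rightarrow> qz" is "(-)"
proof -
  fix a b c d :: rat assume "qz_rel a b" "qz_rel c d"
  then have "(a - b) - (c - d) \<in> \<int>" unfolding qz_rel_def by (rule Ints_diff)
  then show "qz_rel (a - c) (b - d)" by (simp add: qz_rel_def algebra_simps)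
qed
instance
  by standard (transfer; simp add: qz_rel_def algebra_simps)+
end

definition left_module :: "('r::ring_1 \<Rightarrow> 'v::ab_group_add \<Rightarrow> 'v) \<Rightarrow> bool" where
  "left_module smult \<longleftrightarrow>
     (\<forall>r v w. smult r (v + w) = smult r v + smult r w) \<and>
     (\<forall>r s v. smult (r + s) v = smult r v + smult s v) \<and>
     (\<forall>r s v. smult (r * s) v = smult r (smult s v)) \<and>
     (\<forall>v. smult 1 v = v)"

definition additive_qz :: "('v::ab_group_add \<Rightarrow> qz) \<Rightarrow> bool" where
  "additive_qz f \<longleftrightarrow> (\<forall>v w. f (v + w) = f v + f w)"

definition bilinear_qz :: "('v::ab_group_add \<Rightarrow> 'v \<Rightarrow> qz) \<Rightarrow> bool" where
  "bilinear_qz \<beta> \<longleftrightarrow>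
     (\<forall>v v' w. \<beta> (v + v') w = \<beta> v w + \<beta> v' w) \<and>
     (\<forall>v w w'. \<beta> v (w + w') = \<beta> v w + \<beta> v w')"

definition nonsingular :: "('v::ab_group_add \<Rightarrow> 'v \<Rightarrow> qz) \<Rightarrow> bool" where
  "nonsingular \<beta> \<longleftrightarrow> bij_betw (\<lambda>v. \<beta> v) UNIV {f. additive_qz f}"

definition beta_r :: "('r \<Rightarrow> 'v \<Rightarrow> 'v) \<Rightarrow> ('v \<Rightarrow> 'v \<Rightarrow> qz) \<Rightarrow> 'r \<Rightarrow> 'v \<Rightarrow> 'v \<Rightarrow> qz" where
  "beta_r smult \<beta> r = (\<lambda>v w. \<beta> v (smult r w))"

definition transp_form :: "('v \<Rightarrow> 'v \<Rightarrow> qz) \<Rightarrow> 'v \<Rightarrow> 'v \<Rightarrow> qz" where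
  "transp_form \<beta> = (\<lambda>v w. \<beta> w v)"

definition admissible :: "('r::ring_1 \<Rightarrow> 'v::ab_group_add \<Rightarrow> 'v) \<Rightarrow> ('v \<Rightarrow> 'v \<Rightarrow> qz) \<Rightarrow> bool" where
  "admissible smult \<beta> \<longleftrightarrow>
     nonsingular \<beta> \<and>
     (\<forall>m \<in> range (beta_r smult \<beta>). transp_form m \<in> range (beta_r smult \<beta>)) \<and>
     inj (beta_r smult \<beta>)"

definition Quad0 :: "('v::ab_group_add \<Rightarrow> qz) set" where
  "Quad0 = {\<phi>. \<phi> 0 = 0 \<and>
     (\<forall>x y z. \<phi> (x + y + z) - \<phi> (x + y) - \<phi> (x + z) - \<phi> (y + z) + \<phi> x + \<phi> y + \<phi> z = 0)}"

definition sub_qmodule :: "('r \<Rightarrow> 'v::ab_group_add \<Rightarrow> 'v) \<Rightarrow> ('v \<Rightarrow> qz) set \<Rightarrow> bool" where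
  "sub_qmodule smult \<Phi> \<longleftrightarrow>
     \<Phi> \<subseteq> Quad0 \<and> (\<lambda>_. 0) \<in> \<Phi> \<and>
     (\<forall>\<phi>\<in>\<Phi>. \<forall>\<psi>\<in>\<Phi>. (\<lambda>v. \<phi> v + \<psi> v) \<in> \<Phi>) \<and>
     (\<forall>\<phi>\<in>\<Phi>. (\<lambda>v. - \<phi> v) \<in> \<Phi>) \<and>
     (\<forall>\<phi>\<in>\<Phi>. \<forall>r. (\<lambda>v. \<phi> (smult r v)) \<in> \<Phi>)"

definition diag_form :: "('v \<Rightarrow> 'v \<Rightarrow> qz) \<Rightarrow> 'v \<Rightarrow> qz" where
  "diag_form \<beta> = (\<lambda>v. \<beta> v v)"

definition polar :: "('v::ab_group_add \<Rightarrow> qz) \<Rightarrow> 'v \<Rightarrow> 'v \<Rightarrow> qz" where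
  "polar \<phi> = (\<lambda>v w. \<phi> (v + w) - \<phi> v - \<phi> w)"

definition form_ring ::
  "('r::{ring_1,finite} \<Rightarrow> 'v::{ab_group_add,finite} \<Rightarrow> 'v) \<Rightarrow> ('v \<Rightarrow> 'v \<Rightarrow> qz) \<Rightarrow> ('v \<Rightarrow> qz) set \<Rightarrow> bool" where
  "form_ring smult \<beta> \<Phi> \<longleftrightarrow>
     left_module smult \<and> bilinear_qz \<beta> \<and> admissible smult \<beta> \<and>
     sub_qmodule smult \<Phi> \<and>
     (\<forall>m \<in> range (beta_r smult \<beta>). diag_form m \<in> \<Phi>) \<and>
     polar ` \<Phi> \<subseteq> range (beta_r smult \<beta>)"

text \<open>Words of length N: functions nat => V vanishing outside {..<N} (a model of V^N).\<close>
definition words :: "nat \<Rightarrow> (nat \<Rightarrow> 'v::zero) set" where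
  "words N = {x. \<forall>i\<ge>N. x i = 0}"

definition is_code :: "('r \<Rightarrow> 'v::ab_group_add \<Rightarrow> 'v) \<Rightarrow> nat \<Rightarrow> (nat \<Rightarrow> 'v) set \<Rightarrow> bool" where
  "is_code smult N C \<longleftrightarrow>
     C \<subseteq> words N \<and> (\<lambda>_. 0) \<in> C \<and>
     (\<forall>x\<in>C. \<forall>y\<in>C. (\<lambda>i. x i + y i) \<in> C) \<and>
     (\<forall>x\<in>C. \<forall>r. (\<lambda>i. smult r (x i)) \<in> C)"

definition dual_code :: "('v \<Rightarrow> 'v \<Rightarrow> qz) \<Rightarrow> nat \<Rightarrow> (nat \<Rightarrow> 'v::zero) set \<Rightarrow> (nat \<Rightarrow> 'v) set" where
  "dual_code \<beta> N C = {x \<in> words N. \<forall>c\<in>C. (\<Sum>i<N. \<beta> (x i) (c i)) = 0}"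

definition isotropic :: "('v \<Rightarrow> qz) set \<Rightarrow> nat \<Rightarrow> (nat \<Rightarrow> 'v) set \<Rightarrow> bool" where
  "isotropic \<Phi> N C \<longleftrightarrow> (\<forall>c\<in>C. \<forall>\<phi>\<in>\<Phi>. (\<Sum>i<N. \<phi> (c i)) = 0)"

definition code_of_type ::
  "('r \<Rightarrow> 'v::ab_group_add \<Rightarrow> 'v) \<Rightarrow> ('v \<Rightarrow> 'v \<Rightarrow> qz) \<Rightarrow> ('v \<Rightarrow> qz) set \<Rightarrow> nat \<Rightarrow> (nat \<Rightarrow> 'v) set \<Rightarrow> bool" where
  "code_of_type smult \<beta> \<Phi> N C \<longleftrightarrow>
     is_code smult N C \<and> C = dual_code \<beta> N C \<and> isotropic \<Phi> N C"

end

theory Submission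
  imports Defs "HOL-Analysis.Analysis" "HOL-Library.Function_Algebras"
begin

lift_definition qe :: "qz \<Rightarrow> complex" is "\<lambda>q::rat. exp (2 * of_real pi * \<i> * of_rat q)"
proof -
  fix x y :: rat assume "qz_rel x y"
  then obtain k where k: "x - y = of_int k" unfolding qz_rel_def by (auto elim: Ints_cases)
  then have "x = y + of_int k" by simp
  then have "(of_rat x :: complex) = of_rat y + of_int k" by (simp add: of_rat_add)
  then have "2 * of_real pi * \<i> * (of_rat x :: complex) = 2 * of_real pi * \<i> * of_rat y + (of_int (2 * k) * pi) * \<i>"
    by (simp add: algebra_simps)
  then show "exp (2 * of_real pi * \<i> * (of_rat x :: complex)) = exp (2 * of_real pi * \<i> * of_rat y)"
    using exp_eq by blast
qed

lemma qe_add: "qe (a + b) = qe a * qe b"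
  by transfer (simp add: of_rat_add distrib_left exp_add)

lemma qe_zero: "qe 0 = 1"
  by transfer simp

lemma qe_eq_1: "qe a = 1 \<Longrightarrow> a = 0"
proof transfer
  fix q :: rat assume "exp (2 * of_real pi * \<i> * (of_rat q :: complex)) = 1"
  then have "exp (2 * of_real pi * \<i> * (of_rat q :: complex)) = exp 0" by simp
  then obtain n :: int where "2 * of_real pi * \<i> * (of_rat q :: complex) = 0 + (of_int (2 * n) * pi) * \<i>"
    using exp_eq by blast
  then have "2 * of_real pi * \<i> * (of_rat q :: complex) = 2 * of_real pi * \<i> * of_int n"
    by (simp add: algebra_simps)
  then have "(of_rat q :: complex) = of_int n" by simp
  then have "q = of_int n"
    by (metis of_rat_eq_iff of_rat_of_int_eq)
  then show "qz_rel q 0" by (simp add: qz_rel_def)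
qed

definition sg :: "'w::ab_group_add set \<Rightarrow> bool" where
  "sg T \<longleftrightarrow> 0 \<in> T \<and> (\<forall>x\<in>T. \<forall>y\<in>T. x + y \<in> T) \<and> (\<forall>x\<in>T. - x \<in> T)"

definition biadd :: "('w::ab_group_add \<Rightarrow> 'w \<Rightarrow> qz) \<Rightarrow> bool" where
  "biadd B \<longleftrightarrow> (\<forall>u v w. B (u + v) w = B u w + B v w) \<and> (\<forall>u v w. B u (v + w) = B u v + B u w)"

definition lperp :: "('w \<Rightarrow> 'w \<Rightarrow> qz) \<Rightarrow> 'w set \<Rightarrow> 'w set \<Rightarrow> 'w set" where
  "lperp B W S = {u\<in>W. \<forall>s\<in>S. B u s = 0}"

definition rperp :: "('w \<Rightarrow> 'w \<Rightarrow> qz) \<Rightarrow> 'w set \<Rightarrow> 'w set \<Rightarrow> 'w set" where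
  "rperp B W S = {v\<in>W. \<forall>s\<in>S. B s v = 0}"

lemma add_hom_zero:
  fixes f :: "'w::ab_group_add \<Rightarrow> qz"
  assumes "\<forall>x y. f (x + y) = f x + f y"
  shows "f 0 = 0" "f (- x) = - f x"
proof -
  have "f (0 + 0) = f 0 + f 0" using assms by blast
  then show "f 0 = 0" by simp
  then have "f (x + - x) = 0" by simp
  then have "f x + f (- x) = 0" using assms by metis
  then show "f (- x) = - f x" by (metis add_diff_cancel_left' diff_0)
qed

lemma biadd_simps:
  assumes "biadd B"
  shows "B 0 v = 0" "B u 0 = 0" "B (- u) v = - B u v" "B u (- v) = - B u v"
    "B (u + u') v = B u v + B u' v" "B u (v + v') = B u v + B u v'"
proof -
  have h1: "\<forall>x y. (\<lambda>u. B u v) (x + y) = (\<lambda>u. B u v) x + (\<lambda>u. B u v) y" using assms unfolding biadd_def by blast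
  have h2: "\<forall>x y. B u (x + y) = B u x + B u y" using assms unfolding biadd_def by blast
  show "B 0 v = 0" using add_hom_zero(1)[OF h1] by simp
  show "B u 0 = 0" using add_hom_zero(1)[OF h2] by simp
  show "B (- u) v = - B u v" using add_hom_zero(2)[OF h1] by simp
  show "B u (- v) = - B u v" using add_hom_zero(2)[OF h2] by simp
  show "B (u + u') v = B u v + B u' v" "B u (v + v') = B u v + B u v'" using assms unfolding biadd_def by blast+
qed

lemma char_sum:
  fixes f :: "'w::ab_group_add \<Rightarrow> qz"
  assumes fin: "finite T" and T: "sg T" and add: "\<forall>x y. f (x + y) = f x + f y"
  shows "(\<Sum>t\<in>T. qe (f t)) = (if \<forall>t\<in>T. f t = 0 then of_nat (card T) else 0)"
proof (cases "\<forall>t\<in>T. f t = 0")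
  case True
  then show ?thesis by (simp add: qe_zero)
next
  case False
  then obtain t0 where t0: "t0 \<in> T" "f t0 \<noteq> 0" by blast
  have bij: "bij_betw (\<lambda>t. t0 + t) T T"
  proof (rule bij_betwI')
    show "\<And>x y. x \<in> T \<Longrightarrow> y \<in> T \<Longrightarrow> (t0 + x = t0 + y) = (x = y)" by simp
    show "\<And>x. x \<in> T \<Longrightarrow> t0 + x \<in> T" using T t0 unfolding sg_def by blast
    show "\<And>y. y \<in> T \<Longrightarrow> \<exists>x\<in>T. y = t0 + x"
    proof -
      fix y assume "y \<in> T"
      then have "- t0 + y \<in> T" using T t0 unfolding sg_def by blast
      then show "\<exists>x\<in>T. y = t0 + x" by (intro bexI[of _ "- t0 + y"]) auto
    qed
  qed
  define S where "S = (\<Sum>t\<in>T. qe (f t))"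
  have "S = (\<Sum>t\<in>T. qe (f (t0 + t)))"
    unfolding S_def using sum.reindex_bij_betw[OF bij, of "\<lambda>t. qe (f t)"] by simp
  also have "\<dots> = (\<Sum>t\<in>T. qe (f t0) * qe (f t))" using add by (simp add: qe_add)
  also have "\<dots> = qe (f t0) * S" unfolding S_def by (simp add: sum_distrib_left)
  finally have "(1 - qe (f t0)) * S = 0" by (simp add: algebra_simps)
  moreover have "qe (f t0) \<noteq> 1" using qe_eq_1 t0 by blast
  ultimately have "S = 0" by simp
  then show ?thesis using False S_def by auto
qed

lemma card_rperp:
  fixes B :: "'w::ab_group_add \<Rightarrow> 'w \<Rightarrow> qz"
  assumes finW: "finite W" and W: "sg W" and bi: "biadd B"
    and nd: "\<forall>u\<in>W. (\<forall>v\<in>W. B u v = 0) \<longrightarrow> u = 0"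
    and T: "sg T" "T \<subseteq> W"
  shows "card T * card (rperp B W T) = card W"
proof -
  have finT: "finite T" using finW T(2) finite_subset by blast
  have addR: "\<forall>x y. B t (x + y) = B t x + B t y" for t using bi unfolding biadd_def by blast
  have addL: "\<forall>x y. B (x + y) v = B x v + B y v" for v using bi unfolding biadd_def by blast
  have "(\<Sum>t\<in>T. \<Sum>y\<in>W. qe (B t y)) = (\<Sum>t\<in>T. if t = 0 then of_nat (card W) else 0)"
  proof (rule sum.cong[OF refl])
    fix t assume t: "t \<in> T"
    have "(\<forall>y\<in>W. B t y = 0) = (t = 0)" using nd t T(2) biadd_simps(1)[OF bi] by blast
    then show "(\<Sum>y\<in>W. qe (B t y)) = (if t = 0 then of_nat (card W) else 0)"
      using char_sum[OF finW W addR[of t]] by simp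
  qed
  also have "\<dots> = of_nat (card W)" using T(1) finT unfolding sg_def by (simp add: sum.delta)
  finally have 1: "(\<Sum>t\<in>T. \<Sum>y\<in>W. qe (B t y)) = of_nat (card W)" .
  have "(\<Sum>y\<in>W. \<Sum>t\<in>T. qe (B t y)) = (\<Sum>y\<in>W. if \<forall>t\<in>T. B t y = 0 then of_nat (card T) else 0)"
  proof (rule sum.cong[OF refl])
    fix y assume "y \<in> W"
    show "(\<Sum>t\<in>T. qe (B t y)) = (if \<forall>t\<in>T. B t y = 0 then of_nat (card T) else 0)"
      using char_sum[OF finT T(1) addL[of y]] by simp
  qed
  also have "\<dots> = (\<Sum>y\<in>rperp B W T. of_nat (card T))"
    unfolding rperp_def by (rule sum.inter_filter[OF finW, symmetric])
  also have "\<dots> = of_nat (card T * card (rperp B W T))" by simp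
  finally have 2: "(\<Sum>y\<in>W. \<Sum>t\<in>T. qe (B t y)) = (of_nat (card T * card (rperp B W T)) :: complex)" .
  have "(\<Sum>t\<in>T. \<Sum>y\<in>W. qe (B t y)) = (\<Sum>y\<in>W. \<Sum>t\<in>T. qe (B t y))" by (rule sum.swap)
  then have "(of_nat (card W) :: complex) = of_nat (card T * card (rperp B W T))" using 1 2 by simp
  then show ?thesis by (simp only: of_nat_eq_iff)
qed

lemma perp_sg:
  assumes bi: "biadd B" and W: "sg W"
  shows "sg (lperp B W S)" "sg (rperp B W S)" "lperp B W S \<subseteq> W" "rperp B W S \<subseteq> W"
  using W biadd_simps[OF bi] unfolding sg_def lperp_def rperp_def by auto

lemma nd_right:
  fixes B :: "'w::ab_group_add \<Rightarrow> 'w \<Rightarrow> qz"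
  assumes finW: "finite W" and W: "sg W" and bi: "biadd B"
    and nd: "\<forall>u\<in>W. (\<forall>v\<in>W. B u v = 0) \<longrightarrow> u = 0"
  shows "\<forall>v\<in>W. (\<forall>u\<in>W. B u v = 0) \<longrightarrow> v = 0"
proof -
  have "card W * card (rperp B W W) = card W" using card_rperp[OF finW W bi nd W] by simp
  moreover have "card W > 0" using W finW unfolding sg_def by (auto simp: card_gt_0_iff)
  ultimately have c: "card (rperp B W W) = 1" by simp
  have "0 \<in> rperp B W W" using perp_sg[OF bi W] unfolding sg_def by blast
  then have "rperp B W W = {0}" using c by (metis card_1_singletonE singletonD)
  then show ?thesis unfolding rperp_def by auto
qed

lemma sg_card_pos: "sg T \<Longrightarrow> T \<subseteq> W \<Longrightarrow> finite W \<Longrightarrow> card T > 0"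
  unfolding sg_def by (metis card_gt_0_iff empty_iff finite_subset)

lemma biadd_transp: "biadd B \<Longrightarrow> biadd (\<lambda>u v. B v u)"
  unfolding biadd_def by auto

lemma card_lperp:
  fixes B :: "'w::ab_group_add \<Rightarrow> 'w \<Rightarrow> qz"
  assumes finW: "finite W" and W: "sg W" and bi: "biadd B"
    and nd: "\<forall>u\<in>W. (\<forall>v\<in>W. B u v = 0) \<longrightarrow> u = 0"
    and T: "sg T" "T \<subseteq> W"
  shows "card T * card (lperp B W T) = card W"
proof -
  have nd': "\<forall>u\<in>W. (\<forall>v\<in>W. (\<lambda>u v. B v u) u v = 0) \<longrightarrow> u = 0"
    using nd_right[OF finW W bi nd] by simp
  have "lperp B W T = rperp (\<lambda>u v. B v u) W T" unfolding lperp_def rperp_def by simp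
  then show ?thesis using card_rperp[OF finW W biadd_transp[OF bi] nd' T] by simp
qed

lemma double_perp:
  fixes B :: "'w::ab_group_add \<Rightarrow> 'w \<Rightarrow> qz"
  assumes finW: "finite W" and W: "sg W" and bi: "biadd B"
    and nd: "\<forall>u\<in>W. (\<forall>v\<in>W. B u v = 0) \<longrightarrow> u = 0"
    and T: "sg T" "T \<subseteq> W"
  shows "lperp B W (rperp B W T) = T" "rperp B W (lperp B W T) = T"
proof -
  note ps = perp_sg[OF bi W]
  have c1: "card T * card (rperp B W T) = card W" by (rule card_rperp[OF finW W bi nd T])
  have c2: "card (rperp B W T) * card (lperp B W (rperp B W T)) = card W"
    by (rule card_lperp[OF finW W bi nd ps(2) ps(4)])
  have "card (rperp B W T) > 0" using ps(2) ps(4) finW by (rule sg_card_pos)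
  then have "card (lperp B W (rperp B W T)) = card T" using c1 c2 by (metis mult.commute mult_left_cancel neq0_conv)
  moreover have "T \<subseteq> lperp B W (rperp B W T)" using T(2) unfolding lperp_def rperp_def by auto
  moreover have "finite (lperp B W (rperp B W T))" using ps(3) finW finite_subset by blast
  ultimately show "lperp B W (rperp B W T) = T" by (metis card_subset_eq)
  have c3: "card T * card (lperp B W T) = card W" by (rule card_lperp[OF finW W bi nd T])
  have c4: "card (lperp B W T) * card (rperp B W (lperp B W T)) = card W"
    by (rule card_rperp[OF finW W bi nd ps(1) ps(3)])
  have "card (lperp B W T) > 0" using ps(1) ps(3) finW by (rule sg_card_pos)
  then have "card (rperp B W (lperp B W T)) = card T" using c3 c4 by (metis mult.commute mult_left_cancel neq0_conv)
  moreover have "T \<subseteq> rperp B W (lperp B W T)" using T(2) unfolding lperp_def rperp_def by auto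
  moreover have "finite (rperp B W (lperp B W T))" using ps(4) finW finite_subset by blast
  ultimately show "rperp B W (lperp B W T) = T" by (metis card_subset_eq)
qed

lemma perp_inter:
  fixes B :: "'w::ab_group_add \<Rightarrow> 'w \<Rightarrow> qz"
  assumes finW: "finite W" and W: "sg W" and bi: "biadd B"
    and nd: "\<forall>u\<in>W. (\<forall>v\<in>W. B u v = 0) \<longrightarrow> u = 0"
    and C: "sg C" "C \<subseteq> W" and E: "sg E" "E \<subseteq> W"
    and u: "u \<in> lperp B W (C \<inter> E)"
  shows "\<exists>p q. p \<in> lperp B W C \<and> q \<in> lperp B W E \<and> u = p + q"
proof -
  note ps = perp_sg[OF bi W]
  define P where "P = lperp B W C"
  define Q where "Q = lperp B W E"
  define PQ where "PQ = {p + q | p q. p \<in> P \<and> q \<in> Q}"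
  have sP: "sg P" "P \<subseteq> W" "sg Q" "Q \<subseteq> W" unfolding P_def Q_def using ps by auto
  have sPQ: "sg PQ" unfolding sg_def PQ_def
  proof (intro conjI ballI)
    show "0 \<in> {p + q |p q. p \<in> P \<and> q \<in> Q}" using sP unfolding sg_def by force
    fix x y assume "x \<in> {p + q |p q. p \<in> P \<and> q \<in> Q}" "y \<in> {p + q |p q. p \<in> P \<and> q \<in> Q}"
    then obtain p q p' q' where "x = p + q" "y = p' + q'" "p \<in> P" "q \<in> Q" "p' \<in> P" "q' \<in> Q" by blast
    then show "x + y \<in> {p + q |p q. p \<in> P \<and> q \<in> Q}" using sP unfolding sg_def
      by (intro CollectI exI[of _ "p + p'"] exI[of _ "q + q'"]) (auto simp: algebra_simps)
  next
    fix x assume "x \<in> {p + q |p q. p \<in> P \<and> q \<in> Q}"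
    then obtain p q where "x = p + q" "p \<in> P" "q \<in> Q" by blast
    then show "- x \<in> {p + q |p q. p \<in> P \<and> q \<in> Q}" using sP unfolding sg_def
      by (intro CollectI exI[of _ "- p"] exI[of _ "- q"]) (auto simp: algebra_simps)
  qed
  have PQW: "PQ \<subseteq> W"
  proof
    fix x assume "x \<in> PQ"
    then obtain p q where "x = p + q" "p \<in> P" "q \<in> Q" unfolding PQ_def by blast
    then show "x \<in> W" using sP W unfolding sg_def by blast
  qed
  have "rperp B W PQ = rperp B W P \<inter> rperp B W Q"
  proof
    show "rperp B W PQ \<subseteq> rperp B W P \<inter> rperp B W Q"
    proof
      fix v assume v: "v \<in> rperp B W PQ"
      have "P \<subseteq> PQ"
      proof
        fix p assume "p \<in> P" then have "p = p + 0 \<and> p \<in> P \<and> 0 \<in> Q" using sP unfolding sg_def by simp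
        then show "p \<in> PQ" unfolding PQ_def by blast
      qed
      moreover have "Q \<subseteq> PQ"
      proof
        fix q assume "q \<in> Q" then have "q = 0 + q \<and> 0 \<in> P \<and> q \<in> Q" using sP unfolding sg_def by simp
        then show "q \<in> PQ" unfolding PQ_def by blast
      qed
      ultimately show "v \<in> rperp B W P \<inter> rperp B W Q" using v unfolding rperp_def by blast
    qed
    show "rperp B W P \<inter> rperp B W Q \<subseteq> rperp B W PQ"
    proof
      fix v assume v: "v \<in> rperp B W P \<inter> rperp B W Q"
      have "B s v = 0" if "s \<in> PQ" for s
      proof -
        obtain p q where "s = p + q" "p \<in> P" "q \<in> Q" using \<open>s \<in> PQ\<close> unfolding PQ_def by blast
        then show ?thesis using v biadd_simps(5)[OF bi, of p q v] unfolding rperp_def by simp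
      qed
      then show "v \<in> rperp B W PQ" using v unfolding rperp_def by blast
    qed
  qed
  also have "\<dots> = C \<inter> E" unfolding P_def Q_def using double_perp[OF finW W bi nd] C E by simp
  finally have "lperp B W (C \<inter> E) = lperp B W (rperp B W PQ)" by simp
  also have "\<dots> = PQ" using double_perp(1)[OF finW W bi nd sPQ PQW] .
  finally show ?thesis using u unfolding PQ_def P_def Q_def by blast
qed

definition bf :: "('v \<Rightarrow> 'v \<Rightarrow> qz) \<Rightarrow> nat \<Rightarrow> (nat \<Rightarrow> 'v) \<Rightarrow> (nat \<Rightarrow> 'v) \<Rightarrow> qz" where
  "bf \<beta> N u v = (\<Sum>i<N. \<beta> (u i) (v i))"

definition emb :: "nat \<Rightarrow> (nat \<Rightarrow> 'v) \<Rightarrow> (nat \<Rightarrow> 'v) \<Rightarrow> nat \<Rightarrow> 'v" where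
  "emb M x y = (\<lambda>i. if i < M then y i else x (i - M))"

lemma words_sg: "sg (words N :: (nat \<Rightarrow> 'v::ab_group_add) set)"
  unfolding sg_def words_def by auto

lemma finite_words: "finite (words N :: (nat \<Rightarrow> 'v::{finite,zero}) set)"
proof -
  let ?g = "\<lambda>f i. if i < N then f i else (0::'v)"
  have "words N \<subseteq> ?g ` (PiE {..<N} (\<lambda>_. UNIV))"
  proof
    fix x :: "nat \<Rightarrow> 'v" assume x: "x \<in> words N"
    have "x = ?g (restrict x {..<N})" using x unfolding words_def by (auto simp: fun_eq_iff)
    moreover have "restrict x {..<N} \<in> PiE {..<N} (\<lambda>_. UNIV)" by simp
    ultimately show "x \<in> ?g ` (PiE {..<N} (\<lambda>_. UNIV))" by blast
  qed
  moreover have "finite (?g ` (PiE {..<N} (\<lambda>_. (UNIV :: 'v set))))"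
    by (intro finite_imageI finite_PiE) auto
  ultimately show ?thesis using finite_subset by blast
qed

lemma bil_zero:
  assumes "bilinear_qz \<beta>"
  shows "\<beta> 0 w = 0" "\<beta> v 0 = 0"
proof -
  have "\<beta> (0 + 0) w = \<beta> 0 w + \<beta> 0 w" using assms unfolding bilinear_qz_def by blast
  then show "\<beta> 0 w = 0" by simp
  have "\<beta> v (0 + 0) = \<beta> v 0 + \<beta> v 0" using assms unfolding bilinear_qz_def by blast
  then show "\<beta> v 0 = 0" by simp
qed

lemma biadd_bf: "bilinear_qz \<beta> \<Longrightarrow> biadd (bf \<beta> N)"
  unfolding biadd_def bf_def bilinear_qz_def by (simp add: sum.distrib)

lemma nd_bf:
  assumes bl: "bilinear_qz \<beta>" and inj: "inj (\<lambda>v. \<beta> v)"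
  shows "\<forall>u\<in>words N. (\<forall>v\<in>words N. bf \<beta> N u v = 0) \<longrightarrow> u = 0"
proof (intro ballI impI)
  fix u assume u: "u \<in> words N" and h: "\<forall>v\<in>words N. bf \<beta> N u v = 0"
  have "u j = 0" for j
  proof (cases "j < N")
    case False then show ?thesis using u unfolding words_def by simp
  next
    case True
    have "\<beta> (u j) w = 0" for w
    proof -
      have "(\<lambda>i. if i = j then w else 0) \<in> words N" using True unfolding words_def by auto
      then have "0 = bf \<beta> N u (\<lambda>i. if i = j then w else 0)" using h by simp
      also have "\<dots> = (\<Sum>i<N. if i = j then \<beta> (u i) w else 0)"
        unfolding bf_def by (rule sum.cong) (auto simp: bil_zero[OF bl])
      also have "\<dots> = \<beta> (u j) w" using True by (simp add: sum.delta)
      finally show ?thesis by simp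
    qed
    then have "\<beta> (u j) = \<beta> 0" using bil_zero[OF bl] by (simp add: fun_eq_iff)
    then show ?thesis using inj by (simp add: inj_eq)
  qed
  then show "u = 0" by (simp add: fun_eq_iff)
qed

lemma dual_eq: "dual_code \<beta> N C = lperp (bf \<beta> N) (words N) C"
  unfolding dual_code_def lperp_def bf_def by simp

lemma module_facts:
  fixes sm :: "'r::ring_1 \<Rightarrow> 'v::ab_group_add \<Rightarrow> 'v"
  assumes "left_module sm"
  shows "sm r 0 = 0" "sm (-1) v = - v"
proof -
  have "sm r (0 + 0) = sm r 0 + sm r 0" using assms unfolding left_module_def by blast
  then show "sm r 0 = 0" by simp
  have "sm (1 + -1) v = sm 1 v + sm (-1) v" using assms unfolding left_module_def by blast
  moreover have "sm 0 v = 0"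
  proof -
    have "sm (0 + 0) v = sm 0 v + sm 0 v" using assms unfolding left_module_def by blast
    then show ?thesis by simp
  qed
  moreover have "sm 1 v = v" using assms unfolding left_module_def by blast
  ultimately have "v + sm (-1) v = 0" by simp
  then show "sm (-1) v = - v" by (metis add.commute add_diff_cancel_left' diff_0)
qed

lemma plus_fun_lam: "(\<lambda>i. x i + y i) = x + y"
  by (simp add: plus_fun_def)

lemma code_sg:
  fixes sm :: "'r::ring_1 \<Rightarrow> 'v::ab_group_add \<Rightarrow> 'v"
  assumes lm: "left_module sm" and C: "is_code sm N C"
  shows "sg C" "C \<subseteq> words N"
proof -
  have neg: "- x \<in> C" if "x \<in> C" for x
  proof -
    have "(\<lambda>i. sm (-1) (x i)) \<in> C" using C that unfolding is_code_def by blast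
    moreover have "(\<lambda>i. sm (-1) (x i)) = - x" using module_facts(2)[OF lm] by (simp add: fun_eq_iff)
    ultimately show ?thesis by simp
  qed
  show "sg C" unfolding sg_def using C neg unfolding is_code_def zero_fun_def plus_fun_def by auto
  show "C \<subseteq> words N" using C unfolding is_code_def by blast
qed

lemma sum_split: "(\<Sum>i<(M::nat)+K. h i) = (\<Sum>i<M. h i) + (\<Sum>j<K. h (j+M))"
  by (induct K) (auto simp: add.commute add.left_commute)

lemma emb_words: "x \<in> words K \<Longrightarrow> y \<in> words M \<Longrightarrow> emb M x y \<in> words (M+K)"
  unfolding words_def emb_def by auto

lemma emb_add: "emb M (x + x') (y + y') = emb M x y + emb M x' y'"
  unfolding emb_def by (auto simp: fun_eq_iff)

lemma emb_neg: "emb M (- x) (- y) = - emb M x y"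
  unfolding emb_def by (auto simp: fun_eq_iff)

lemma emb_diff: "emb M x y - emb M x' y' = emb M (x - x') (y - y')"
  unfolding emb_def by (auto simp: fun_eq_iff)

lemma emb_zero: "emb M 0 0 = 0"
  unfolding emb_def by (auto simp: fun_eq_iff)

lemma emb_sm: "(\<lambda>i. sm r (emb M x y i)) = emb M (\<lambda>i. sm r (x i)) (\<lambda>i. sm r (y i))"
  unfolding emb_def by (auto simp: fun_eq_iff)

lemma bf_emb: "bf \<beta> (M+K) (emb M x y) (emb M x' y') = bf \<beta> M y y' + bf \<beta> K x x'"
  unfolding bf_def using sum_split[of "\<lambda>i. \<beta> (emb M x y i) (emb M x' y' i)" M K]
  by (simp add: emb_def)

lemma phi_emb: "(\<Sum>i<M+K. \<phi> (emb M x y i)) = (\<Sum>i<M. \<phi> (y i)) + (\<Sum>i<K. \<phi> (x i))"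
  using sum_split[of "\<lambda>i. \<phi> (emb M x y i)" M K] by (simp add: emb_def)

lemma emb_decomp:
  assumes "u \<in> words (M+K)"
  shows "u = emb M (\<lambda>j. u (j+M)) (\<lambda>i. if i < M then u i else 0)"
    "(\<lambda>j. u (j+M)) \<in> words K" "(\<lambda>i. if i < M then u i else 0) \<in> words M"
  using assms unfolding emb_def words_def by (auto simp: fun_eq_iff)

lemma sgE_lemma:
  fixes D :: "(nat \<Rightarrow> 'v::ab_group_add) set"
  assumes sgD: "sg D"
  shows "sg {emb M a b | a b. a \<in> words K \<and> b \<in> D}"
proof -
  define E where "E = {emb M a b | a b. a \<in> words K \<and> b \<in> D}"
  have wK: "sg (words K :: (nat \<Rightarrow> 'v) set)" by (rule words_sg)
  have "sg E" unfolding sg_def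
  proof (intro conjI ballI)
    have "(0::nat\<Rightarrow>'v) \<in> words K" using wK unfolding sg_def by blast
    moreover have "(0::nat\<Rightarrow>'v) \<in> D" using sgD unfolding sg_def by blast
    ultimately have "emb M 0 0 \<in> E" unfolding E_def by blast
    then show "0 \<in> E" by (simp only: emb_zero)
  next
    fix u v assume "u \<in> E" "v \<in> E"
    then obtain a b a' b' where ab: "u = emb M a b" "v = emb M a' b'" "a \<in> words K" "b \<in> D" "a' \<in> words K" "b' \<in> D"
      unfolding E_def by blast
    have "a + a' \<in> words K" using wK ab(3,5) unfolding sg_def by blast
    moreover have "b + b' \<in> D" using sgD ab(4,6) unfolding sg_def by blast
    ultimately have "emb M (a + a') (b + b') \<in> E" unfolding E_def by blast
    moreover have "u + v = emb M (a + a') (b + b')" using ab(1,2) emb_add by metis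
    ultimately show "u + v \<in> E" by simp
  next
    fix u assume "u \<in> E"
    then obtain a b where ab: "u = emb M a b" "a \<in> words K" "b \<in> D"
      unfolding E_def by blast
    have "- a \<in> words K" using wK ab(2) unfolding sg_def by blast
    moreover have "- b \<in> D" using sgD ab(3) unfolding sg_def by blast
    ultimately have "emb M (- a) (- b) \<in> E" unfolding E_def by blast
    moreover have "- u = emb M (- a) (- b)" using ab(1) emb_neg by metis
    ultimately show "- u \<in> E" by simp
  qed
  then show ?thesis unfolding E_def .
qed

lemma reduce:
  fixes sm :: "'r::{ring_1,finite} \<Rightarrow> 'v::{ab_group_add,finite} \<Rightarrow> 'v"
  assumes fr: "form_ring sm \<beta> \<Phi>"
    and D: "code_of_type sm \<beta> \<Phi> M D"
    and C: "code_of_type sm \<beta> \<Phi> (M+K) C"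
  shows "code_of_type sm \<beta> \<Phi> K {x\<in>words K. \<exists>y\<in>D. emb M x y \<in> C}"
proof -
  define C' where "C' = {x\<in>words K. \<exists>y\<in>D. emb M x y \<in> C}"
  note fr2 = fr[unfolded form_ring_def]
  have lm: "left_module sm" using fr2 by (rule conjunct1)
  have bl: "bilinear_qz \<beta>" using fr2[THEN conjunct2] by (rule conjunct1)
  have adm: "admissible sm \<beta>" using fr2[THEN conjunct2, THEN conjunct2] by (rule conjunct1)
  have ns: "nonsingular \<beta>" using adm[unfolded admissible_def] by (rule conjunct1)
  have inj: "inj (\<lambda>v. \<beta> v)" using ns unfolding nonsingular_def by (rule bij_betw_imp_inj_on)
  have cC: "is_code sm (M+K) C \<and> C = lperp (bf \<beta> (M+K)) (words (M+K)) C \<and> isotropic \<Phi> (M+K) C"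
    using C unfolding code_of_type_def dual_eq .
  have iC: "is_code sm (M+K) C" using cC by (rule conjunct1)
  have dC: "C = lperp (bf \<beta> (M+K)) (words (M+K)) C" using cC[THEN conjunct2] by (rule conjunct1)
  have isoC: "isotropic \<Phi> (M+K) C" using cC[THEN conjunct2] by (rule conjunct2)
  have cD: "is_code sm M D \<and> D = lperp (bf \<beta> M) (words M) D \<and> isotropic \<Phi> M D"
    using D unfolding code_of_type_def dual_eq .
  have iD: "is_code sm M D" using cD by (rule conjunct1)
  have dD: "D = lperp (bf \<beta> M) (words M) D" using cD[THEN conjunct2] by (rule conjunct1)
  have isoD: "isotropic \<Phi> M D" using cD[THEN conjunct2] by (rule conjunct2)
  note sgC = code_sg[OF lm iC] and sgD = code_sg[OF lm iD]
  have wK: "sg (words K :: (nat \<Rightarrow> 'v) set)" by (rule words_sg)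
  have wN: "sg (words (M+K) :: (nat \<Rightarrow> 'v) set)" by (rule words_sg)
  note biK = biadd_simps[OF biadd_bf[OF bl, of K]]
  note biM = biadd_simps[OF biadd_bf[OF bl, of M]]
  have isc: "is_code sm K C'"
    unfolding is_code_def
  proof (intro conjI ballI allI)
    show "C' \<subseteq> words K" unfolding C'_def by blast
    have z1: "(0::nat\<Rightarrow>'v) \<in> words K" using wK unfolding sg_def by blast
    have z2: "(0::nat\<Rightarrow>'v) \<in> D" using sgD unfolding sg_def by blast
    have z3: "emb M 0 0 \<in> C" using sgC unfolding sg_def emb_zero by blast
    have e: "\<exists>y\<in>D. emb M 0 y \<in> C" using z3 z2 by (rule bexI)
    have "(0::nat\<Rightarrow>'v) \<in> C'" unfolding C'_def mem_Collect_eq using z1 e by (rule conjI)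
    then show "(\<lambda>_. 0) \<in> C'" by (simp only: zero_fun_def)
  next
    fix x x' assume xC: "x \<in> C'" and xC': "x' \<in> C'"
    obtain y where o1: "x \<in> words K" "y \<in> D" "emb M x y \<in> C" using xC unfolding C'_def by blast
    obtain y' where o2: "x' \<in> words K" "y' \<in> D" "emb M x' y' \<in> C" using xC' unfolding C'_def by blast
    have h1: "x + x' \<in> words K" using wK o1(1) o2(1) unfolding sg_def by blast
    have h2: "y + y' \<in> D" using sgD o1(2) o2(2) unfolding sg_def by blast
    have h3: "emb M (x + x') (y + y') \<in> C" unfolding emb_add using sgC o1(3) o2(3) unfolding sg_def by blast
    have e: "\<exists>y\<in>D. emb M (x + x') y \<in> C" using h3 h2 by (rule bexI)
    have "x + x' \<in> C'" unfolding C'_def mem_Collect_eq using h1 e by (rule conjI)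
    then show "(\<lambda>i. x i + x' i) \<in> C'" by (simp add: plus_fun_def)
  next
    fix x r assume "x \<in> C'"
    then obtain y where xy: "x \<in> words K" "y \<in> D" "emb M x y \<in> C"
      unfolding C'_def by blast
    have h1: "(\<lambda>i. sm r (x i)) \<in> words K" using xy(1) module_facts(1)[OF lm] unfolding words_def by simp
    have h2: "(\<lambda>i. sm r (y i)) \<in> D" using iD xy(2) unfolding is_code_def by blast
    have "(\<lambda>i. sm r (emb M x y i)) \<in> C" using iC xy(3) unfolding is_code_def by blast
    then have h3: "emb M (\<lambda>i. sm r (x i)) (\<lambda>i. sm r (y i)) \<in> C" by (simp only: emb_sm)
    have e: "\<exists>y\<in>D. emb M (\<lambda>i. sm r (x i)) y \<in> C" using h3 h2 by (rule bexI)
    show "(\<lambda>i. sm r (x i)) \<in> C'" unfolding C'_def mem_Collect_eq using h1 e by (rule conjI)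
  qed
  have iso: "isotropic \<Phi> K C'"
    unfolding isotropic_def
  proof (intro ballI)
    fix x \<phi> assume "x \<in> C'" "\<phi> \<in> \<Phi>"
    then obtain y where "y \<in> D" "emb M x y \<in> C" unfolding C'_def by blast
    then have "(\<Sum>i<M+K. \<phi> (emb M x y i)) = 0" "(\<Sum>i<M. \<phi> (y i)) = 0"
      using isoC isoD \<open>\<phi> \<in> \<Phi>\<close> unfolding isotropic_def by auto
    then show "(\<Sum>i<K. \<phi> (x i)) = 0" using phi_emb[where \<phi>=\<phi> and M=M and K=K and x=x and y=y] by simp
  qed
  have sd: "C' = lperp (bf \<beta> K) (words K) C'"
  proof
    show "C' \<subseteq> lperp (bf \<beta> K) (words K) C'"
    proof
      fix x assume "x \<in> C'"
      then obtain y where x: "x \<in> words K" "y \<in> D" "emb M x y \<in> C" unfolding C'_def by blast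
      have "bf \<beta> K x c = 0" if "c \<in> C'" for c
      proof -
        obtain y' where "y' \<in> D" "emb M c y' \<in> C" using \<open>c \<in> C'\<close> unfolding C'_def by blast
        then have "bf \<beta> (M+K) (emb M x y) (emb M c y') = 0" "bf \<beta> M y y' = 0"
          using x dC dD unfolding lperp_def by blast+
        then show ?thesis using bf_emb[where \<beta>=\<beta> and M=M and K=K and x=x and y=y and x'=c and y'=y'] by simp
      qed
      then show "x \<in> lperp (bf \<beta> K) (words K) C'" using x unfolding lperp_def by blast
    qed
  next
    show "lperp (bf \<beta> K) (words K) C' \<subseteq> C'"
    proof
      fix x assume xl: "x \<in> lperp (bf \<beta> K) (words K) C'"
      then have xK: "x \<in> words K" unfolding lperp_def by blast
      define E where "E = {emb M a b | a b. a \<in> words K \<and> b \<in> D}"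
      have sgE: "sg E" unfolding E_def using sgD(1) by (rule sgE_lemma)
      have EW: "E \<subseteq> words (M+K)" unfolding E_def using emb_words sgD by blast
      define u0 where "u0 = emb M x 0"
      have z0: "(0::nat\<Rightarrow>'v) \<in> words M" by (simp add: words_def)
      have u0W: "u0 \<in> words (M+K)" unfolding u0_def using xK z0 by (rule emb_words)
      have "u0 \<in> lperp (bf \<beta> (M+K)) (words (M+K)) (C \<inter> E)"
      proof -
        have "bf \<beta> (M+K) u0 s = 0" if sCE: "s \<in> C \<inter> E" for s
        proof -
          obtain a b where s: "s = emb M a b" "a \<in> words K" "b \<in> D" using sCE unfolding E_def by blast
          have "emb M a b \<in> C" using sCE s(1) by simp
          then have "a \<in> C'" using s(2,3) unfolding C'_def by blast
          then have "bf \<beta> K x a = 0" using xl unfolding lperp_def by blast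
          then show ?thesis unfolding u0_def s bf_emb using biM(1) by simp
        qed
        then show ?thesis using u0W unfolding lperp_def by blast
      qed
      then obtain p q where pq: "p \<in> lperp (bf \<beta> (M+K)) (words (M+K)) C"
        "q \<in> lperp (bf \<beta> (M+K)) (words (M+K)) E" "u0 = p + q"
        using perp_inter[OF finite_words words_sg biadd_bf[OF bl] nd_bf[OF bl inj] sgC sgE EW] by blast
      have pC: "p \<in> C" using pq(1) by (subst dC) assumption
      have qW: "q \<in> words (M+K)" using pq(2) unfolding lperp_def by blast
      define a where "a = (\<lambda>j. q (j+M))"
      define b where "b = (\<lambda>i. if i < M then q i else (0::'v))"
      have qab: "q = emb M a b" "a \<in> words K" "b \<in> words M" unfolding a_def b_def using emb_decomp[OF qW] by auto
      have "\<forall>a'\<in>words K. bf \<beta> K a a' = 0"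
      proof
        fix a' :: "nat \<Rightarrow> 'v" assume "a' \<in> words K"
        then have "emb M a' 0 \<in> E" unfolding E_def using sgD unfolding sg_def by blast
        then have "bf \<beta> (M+K) q (emb M a' 0) = 0" using pq(2) unfolding lperp_def by blast
        then show "bf \<beta> K a a' = 0" unfolding qab(1) bf_emb using biM(2) by simp
      qed
      then have a0: "a = 0" using nd_bf[OF bl inj] qab(2) by blast
      have "b \<in> lperp (bf \<beta> M) (words M) D"
      proof -
        have "bf \<beta> M b d = 0" if dD': "d \<in> D" for d
        proof -
          have "emb M 0 d \<in> E" unfolding E_def using dD' wK unfolding sg_def by blast
          then have "bf \<beta> (M+K) q (emb M 0 d) = 0" using pq(2) unfolding lperp_def by blast
          then show ?thesis unfolding qab(1) bf_emb using biK(2) by simp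
        qed
        then show ?thesis using qab(3) unfolding lperp_def by blast
      qed
      then have bD: "b \<in> D" by (subst dD) assumption
      have "p = u0 - q" using pq(3) by simp
      also have "\<dots> = emb M x (- b)" unfolding u0_def qab(1) a0 emb_diff by simp
      finally have "emb M x (- b) \<in> C" using pC by simp
      moreover have "- b \<in> D" using bD sgD unfolding sg_def by blast
      ultimately show "x \<in> C'" unfolding C'_def using xK by blast
    qed
  qed
  have sd2: "C' = dual_code \<beta> K C'" unfolding dual_eq by (rule sd)
  show ?thesis unfolding C'_def[symmetric] code_of_type_def using isc sd2 iso by (intro conjI)
qed

theorem mainTheorem3:
  fixes smult :: "'r::{ring_1,finite} \<Rightarrow> 'v::{ab_group_add,finite} \<Rightarrow> 'v"
    and \<beta> :: "'v \<Rightarrow> 'v \<Rightarrow> qz"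
    and \<Phi> :: "('v \<Rightarrow> qz) set"
  assumes "form_ring smult \<beta> \<Phi>"
    and "\<exists>N\<ge>1. \<exists>C. code_of_type smult \<beta> \<Phi> N C"
  shows "Gcd {N::nat. N \<ge> 1 \<and> (\<exists>C. code_of_type smult \<beta> \<Phi> N C)}
       = (LEAST N::nat. N \<ge> 1 \<and> (\<exists>C. code_of_type smult \<beta> \<Phi> N C))"
proof -
  define S where "S = {N::nat. N \<ge> 1 \<and> (\<exists>C. code_of_type smult \<beta> \<Phi> N C)}"
  define m where "m = (LEAST N::nat. N \<ge> 1 \<and> (\<exists>C. code_of_type smult \<beta> \<Phi> N C))"
  have mS: "m \<in> S" unfolding m_def S_def using LeastI_ex[OF assms(2)] by simp
  have mle: "N \<in> S \<Longrightarrow> m \<le> N" for N unfolding m_def S_def by (simp add: Least_le)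
  have dv: "N \<in> S \<Longrightarrow> m dvd N" for N
  proof (induction N rule: less_induct)
    case (less N)
    show ?case
    proof (cases "N = m")
      case True then show ?thesis by simp
    next
      case False
      then have lt: "m < N" using mle less.prems by fastforce
      obtain D where D: "code_of_type smult \<beta> \<Phi> m D" using mS unfolding S_def by blast
      obtain C where C: "code_of_type smult \<beta> \<Phi> (m + (N - m)) C" using less.prems lt unfolding S_def by auto
      have "N - m \<in> S" unfolding S_def using reduce[OF assms(1) D C] lt by auto
      moreover have "N - m < N" using lt mS unfolding S_def by auto
      ultimately have "m dvd N - m" using less.IH by blast
      then show ?thesis using lt by (metis dvd_diff_nat dvd_refl le_add_diff_inverse less_imp_le_nat dvd_add)
    qed
  qed
  have "Gcd S = m"
  proof (rule dvd_antisym)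
    show "Gcd S dvd m" using mS by (rule Gcd_dvd)
    show "m dvd Gcd S" using dv by (simp add: Gcd_greatest)
  qed
  then show ?thesis unfolding S_def m_def .
qed

end
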